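(* For every finite set $A$ of lines in $\mathbb{R}^2$ there exists a point $q\in\mathbb{R}^2$ such that for every closed halfplane $h$ containing $q$ there is a set $A'\subseteq A$ with $|A'|\ge\sqrt{|A|/3}$ and $V(A')\subseteq h$.
   Context: For a finite set $A$ of lines in $\mathbb{R}^2$, $V(A)$ denotes the set of all intersection points of pairs of lines of $A$. *)

theory Defs
  imports Complex_Main
begin

definition is_line :: "(real \<times> real) set \<Rightarrow> bool" where
  "is_line L \<longleftrightarrow> (\<exists>a b c. (a, b) \<noteq> (0, 0) \<and> L = {(x, y). a * x + b * y = c})"

definition is_closed_halfplane :: "(real \<times> real) set \<Rightarrow> bool" where
  "is_closed_halfplane H \<longleftrightarrow> (\<exists>a b c. (a, b) \<noteq> (0, 0) \<and> H = {(x, y). a * x + b * y \<le> c})"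

definition vertices :: "(real \<times> real) set set \<Rightarrow> (real \<times> real) set" where
  "vertices A = {p. \<exists>L1\<in>A. \<exists>L2\<in>A. L1 \<noteq> L2 \<and> p \<in> L1 \<and> p \<in> L2}"

end

theory Submission
  imports Defs "HOL-Analysis.Analysis"
begin


definition lrep :: "(real \<times> real) set \<Rightarrow> real \<times> real \<times> real" where
  "lrep L = (SOME t. (fst t, fst (snd t)) \<noteq> (0,0) \<and> L = {(x,y). fst t * x + fst (snd t) * y = snd (snd t)})"

definition "lp L = fst (lrep L)"
definition "lq L = fst (snd (lrep L))"
definition "lr L = snd (snd (lrep L))"

lemma lrep_spec:
  assumes "is_line L"
  shows "(lp L, lq L) \<noteq> (0,0) \<and> L = {(x,y). lp L * x + lq L * y = lr L}"
proof -
  from assms obtain a b c where abc: "(a, b) \<noteq> (0, 0)" "L = {(x, y). a * x + b * y = c}"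
    unfolding is_line_def by blast
  have "(fst (lrep L), fst (snd (lrep L))) \<noteq> (0,0) \<and> L = {(x,y). fst (lrep L) * x + fst (snd (lrep L)) * y = snd (snd (lrep L))}"
    unfolding lrep_def by (rule someI[of _ "(a,b,c)"]) (use abc in simp)
  then show ?thesis unfolding lp_def lq_def lr_def .
qed

lemma on_line:
  assumes "is_line L" "P \<in> L"
  shows "lp L * fst P + lq L * snd P = lr L"
proof -
  have "P \<in> {(x,y). lp L * x + lq L * y = lr L}" using lrep_spec[OF assms(1)] assms(2) by simp
  then show ?thesis by (cases P) simp
qed

lemma det_nz:
  assumes "is_line L1" "is_line L2" "L1 \<noteq> L2" "P \<in> L1" "P \<in> L2"
  shows "lp L1 * lq L2 - lp L2 * lq L1 \<noteq> 0"
proof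
  assume d: "lp L1 * lq L2 - lp L2 * lq L1 = 0"
  define p1 where "p1 = lp L1" define q1 where "q1 = lq L1" define r1 where "r1 = lr L1"
  define p2 where "p2 = lp L2" define q2 where "q2 = lq L2" define r2 where "r2 = lr L2"
  have nz1: "(p1,q1) \<noteq> (0,0)" and e1: "L1 = {(x,y). p1*x+q1*y = r1}"
    using lrep_spec[OF assms(1)] unfolding p1_def q1_def r1_def by auto
  have nz2: "(p2,q2) \<noteq> (0,0)" and e2: "L2 = {(x,y). p2*x+q2*y = r2}"
    using lrep_spec[OF assms(2)] unfolding p2_def q2_def r2_def by auto
  have d': "p1*q2 = p2*q1" using d unfolding p1_def q1_def p2_def q2_def by simp
  obtain l where l: "p2 = l*p1" "q2 = l*q1"
  proof (cases "p1 = 0")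
    case True
    then have "q1 \<noteq> 0" using nz1 by auto
    then have "p2 = 0" using d' True by simp
    show ?thesis by (rule that[of "q2/q1"]) (use True \<open>q1 \<noteq> 0\<close> \<open>p2 = 0\<close> in auto)
  next
    case False
    show ?thesis by (rule that[of "p2/p1"]) (use False d' in \<open>auto simp: field_simps\<close>)
  qed
  have l0: "l \<noteq> 0" using l nz2 by auto
  have P1: "p1 * fst P + q1 * snd P = r1" using on_line[OF assms(1,4)] unfolding p1_def q1_def r1_def .
  have P2: "p2 * fst P + q2 * snd P = r2" using on_line[OF assms(2,5)] unfolding p2_def q2_def r2_def .
  have "r2 = l * (p1 * fst P + q1 * snd P)" using P2 l by (simp add: algebra_simps)
  then have r: "r2 = l * r1" using P1 by simp
  have key: "(l * p1 * x + l * q1 * y = l * r1) \<longleftrightarrow> (p1 * x + q1 * y = r1)" for x y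
  proof -
    have "l * p1 * x + l * q1 * y = l * (p1 * x + q1 * y)" by (simp add: algebra_simps)
    then show ?thesis using l0 by simp
  qed
  have "L1 = L2"
    unfolding e1 e2 l r by (simp only: key)
  then show False using assms(3) by simp
qed

lemma meet_unique:
  assumes "lp L1 * lq L2 - lp L2 * lq L1 \<noteq> 0" "is_line L1" "is_line L2"
    "P \<in> L1" "P \<in> L2" "P' \<in> L1" "P' \<in> L2"
  shows "P = P'"
proof -
  have e: "lp L1 * fst P + lq L1 * snd P = lr L1" "lp L2 * fst P + lq L2 * snd P = lr L2"
    "lp L1 * fst P' + lq L1 * snd P' = lr L1" "lp L2 * fst P' + lq L2 * snd P' = lr L2"
    using on_line assms by auto
  have z1: "lp L1 * (fst P - fst P') + lq L1 * (snd P - snd P') = 0"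
    using e(1) e(3) by (simp add: algebra_simps)
  have z2: "lp L2 * (fst P - fst P') + lq L2 * (snd P - snd P') = 0"
    using e(2) e(4) by (simp add: algebra_simps)
  have f1: "(lp L1 * lq L2 - lp L2 * lq L1) * (fst P - fst P') = 0"
  proof -
  have "(lp L1 * lq L2 - lp L2 * lq L1) * (fst P - fst P') =
     lq L2 * (lp L1 * (fst P - fst P') + lq L1 * (snd P - snd P')) - lq L1 * (lp L2 * (fst P - fst P') + lq L2 * (snd P - snd P'))"
    by (simp add: algebra_simps)
  also have "\<dots> = 0" using z1 z2 by simp
  finally show ?thesis .
  qed
  have f2: "(lp L1 * lq L2 - lp L2 * lq L1) * (snd P - snd P') = 0"
  proof -
  have "(lp L1 * lq L2 - lp L2 * lq L1) * (snd P - snd P') =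
     lp L1 * (lp L2 * (fst P - fst P') + lq L2 * (snd P - snd P')) - lp L2 * (lp L1 * (fst P - fst P') + lq L1 * (snd P - snd P'))"
    by (simp add: algebra_simps)
  also have "\<dots> = 0" using z1 z2 by simp
  finally show ?thesis .
  qed
  show ?thesis using f1 f2 assms(1) by (simp add: prod_eq_iff)
qed

lemma finite_vertices:
  assumes "finite A" "\<forall>L\<in>A. is_line L"
  shows "finite (vertices A)"
proof -
  have sub: "vertices A \<subseteq> (\<Union>(L1,L2)\<in>A\<times>A. if L1 = L2 then {} else L1 \<inter> L2)"
  proof
    fix P assume "P \<in> vertices A"
    then obtain L1 L2 where "L1 \<in> A" "L2 \<in> A" "L1 \<noteq> L2" "P \<in> L1" "P \<in> L2"
      unfolding vertices_def by blast
    then show "P \<in> (\<Union>(L1,L2)\<in>A\<times>A. if L1 = L2 then {} else L1 \<inter> L2)"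
      by (intro UN_I[of "(L1,L2)"]) auto
  qed
  have fin1: "finite (if L1 = L2 then {} else L1 \<inter> L2)" if "L1 \<in> A" "L2 \<in> A" for L1 L2
  proof (cases "L1 = L2 \<or> L1 \<inter> L2 = {}")
    case True then show ?thesis by auto
  next
    case False
    then obtain P where P: "P \<in> L1" "P \<in> L2" "L1 \<noteq> L2" by auto
    have l1: "is_line L1" and l2: "is_line L2" using assms(2) that by auto
    have "Q = P" if "Q \<in> L1" "Q \<in> L2" for Q
      using meet_unique[OF det_nz[OF l1 l2 P(3) P(1) P(2)] l1 l2 that P(1) P(2)] .
    then have "L1 \<inter> L2 \<subseteq> {P}" by blast
    then show ?thesis using finite_subset by auto
  qed
  have fin: "finite (\<Union>(L1,L2)\<in>A\<times>A. if L1 = L2 then {} else L1 \<inter> L2)"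
    by (rule finite_UN_I) (use assms(1) fin1 in auto)
  show ?thesis using finite_subset[OF sub fin] .
qed



definition "prec k x y \<longleftrightarrow> fst (k x) \<le> fst (k y) \<and> snd (k x) \<le> snd (k y) \<and> k x \<noteq> (k y :: real \<times> real)"
definition "chn k C \<longleftrightarrow> (\<forall>x\<in>C. \<forall>y\<in>C. x \<noteq> y \<longrightarrow> prec k x y \<or> prec k y x)"
definition "antich k S \<longleftrightarrow> (\<forall>x\<in>S. \<forall>y\<in>S. \<not> prec k x y)"

lemma prec_trans: "prec k x y \<Longrightarrow> prec k y z \<Longrightarrow> prec k x z"
  unfolding prec_def by (metis dual_order.antisym dual_order.trans prod_eq_iff)

lemma prec_irrefl: "\<not> prec k x x"
  unfolding prec_def by simp

lemma mirsky:
  assumes "finite B" "\<And>C. C \<subseteq> B \<Longrightarrow> chn k C \<Longrightarrow> card C \<le> m"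
  shows "\<exists>S\<subseteq>B. antich k S \<and> card B \<le> m * card S"
proof -
  define CS where "CS x = {C. C \<subseteq> B \<and> chn k C \<and> x \<in> C \<and> (\<forall>y\<in>C. y = x \<or> prec k y x)}" for x
  define h where "h x = Max (card ` CS x)" for x
  have finCS: "finite (CS x)" for x
    by (rule finite_subset[of _ "Pow B"]) (use assms(1) in \<open>auto simp: CS_def\<close>)
  have singl: "{x} \<in> CS x" if "x \<in> B" for x
    using that unfolding CS_def chn_def by auto
  have hge: "1 \<le> h x" if "x \<in> B" for x
  proof -
    have "card {x} \<in> card ` CS x" using singl[OF that] by blast
    then have "card {x} \<le> h x" unfolding h_def using finCS by (intro Max_ge) auto
    then show ?thesis by simp
  qed
  have hin: "\<exists>C\<in>CS x. card C = h x" if "x \<in> B" for x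
  proof -
    have "h x \<in> card ` CS x" unfolding h_def using finCS singl[OF that] by (intro Max_in) auto
    then show ?thesis by auto
  qed
  have hle: "h x \<le> m" if "x \<in> B" for x
    using hin[OF that] assms(2) unfolding CS_def by (metis (mono_tags, lifting) mem_Collect_eq)
  have hinc: "h x < h y" if xB: "x \<in> B" and "y \<in> B" "prec k x y" for x y
  proof -
    obtain C where C: "C \<in> CS x" "card C = h x" using hin[OF xB] by blast
    have CB: "C \<subseteq> B" and cc: "chn k C" and xC: "x \<in> C" and top: "\<forall>z\<in>C. z = x \<or> prec k z x"
      using C(1) unfolding CS_def by auto
    have below: "prec k z y" if zC: "z \<in> C" for z
    proof (cases "z = x")
      case True then show ?thesis using \<open>prec k x y\<close> by simp
    next
      case False
      then have "prec k z x" using top zC by auto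
      then show ?thesis by (rule prec_trans) (rule \<open>prec k x y\<close>)
    qed
    have yC: "y \<notin> C"
    proof
      assume "y \<in> C"
      then have "prec k y y" by (rule below)
      then show False using prec_irrefl[of k y] by blast
    qed
    have "chn k (insert y C)"
      unfolding chn_def
    proof (intro ballI impI)
      fix u v assume u: "u \<in> insert y C" and v: "v \<in> insert y C" and uv: "u \<noteq> v"
      show "prec k u v \<or> prec k v u"
      proof (cases "u = y")
        case True then show ?thesis using v uv below by auto
      next
        case False
        show ?thesis
        proof (cases "v = y")
          case True then show ?thesis using u False below by auto
        next
          case vF: False
          then show ?thesis using cc u v uv False unfolding chn_def by auto
        qed
      qed
    qed
    then have "insert y C \<in> CS y"
      unfolding CS_def using CB below \<open>y \<in> B\<close> by auto
    then have "card (insert y C) \<le> h y" unfolding h_def using finCS by (intro Max_ge) auto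
    moreover have "card (insert y C) = h x + 1"
      using yC C(2) finite_subset[OF CB assms(1)] by simp
    ultimately show ?thesis by simp
  qed
  define S where "S j = {x\<in>B. h x = j}" for j
  have ant: "antich k (S j)" for j
    unfolding antich_def S_def
  proof (intro ballI notI)
    fix x y assume "x \<in> {x \<in> B. h x = j}" "y \<in> {x \<in> B. h x = j}" "prec k x y"
    then show False using hinc[of x y] by auto
  qed
  show ?thesis
  proof (cases "m = 0")
    case True
    then have "B = {}" using hge hle by fastforce
    then show ?thesis by (intro exI[of _ "{}"]) (auto simp: antich_def)
  next
    case False
    have cover: "B \<subseteq> (\<Union>j\<in>{1..m}. S j)"
      unfolding S_def using hge hle by auto
    have "card B \<le> card (\<Union>j\<in>{1..m}. S j)"
      by (rule card_mono) (use cover assms(1) in \<open>auto simp: S_def\<close>)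
    also have "\<dots> \<le> (\<Sum>j\<in>{1..m}. card (S j))" by (rule card_UN_le) simp
    finally have cs: "card B \<le> (\<Sum>j\<in>{1..m}. card (S j))" .
    define M where "M = Max ((\<lambda>j. card (S j)) ` {1..m})"
    have "M \<in> (\<lambda>j. card (S j)) ` {1..m}" unfolding M_def using False by (intro Max_in) auto
    then obtain j where j: "j \<in> {1..m}" "card (S j) = M" by auto
    have bnd: "card (S i) \<le> M" if "i \<in> {1..m}" for i
      unfolding M_def using that by (intro Max_ge) auto
    have "(\<Sum>j\<in>{1..m}. card (S j)) \<le> card {1..m} * M"
      using sum_bounded_above[of "{1..m}" "\<lambda>j. card (S j)" M] bnd by simp
    then have "card B \<le> m * card (S j)" using cs j by simp
    moreover have "S j \<subseteq> B" unfolding S_def by auto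
    ultimately show ?thesis using ant by blast
  qed
qed



definition "hG a b L = a * lq L - b * lp L"
definition "hB a b L = a * lp L + b * lq L"
definition "hA a b c L = a*c*lp L + b*c*lq L - lr L*(a*a+b*b)"
definition "ht a b L = hB a b L / hG a b L"
definition "hm a b c L = hA a b c L / hG a b L"
definition "hM A a b c = 1 + (\<Sum>L\<in>A. \<bar>ht a b L\<bar> + \<bar>hm a b c L\<bar>)"
definition "hkey A a b c L = (if hG a b L \<noteq> 0 then (ht a b L, hm a b c L)
   else if hA a b c L * hB a b L \<ge> 0 then (- hM A a b c, - hM A a b c) else (hM A a b c, - hM A a b c))"

lemma ident:
  fixes a b c p1 q1 r1 p2 q2 r2 x y :: real
  assumes "p1*x+q1*y = r1" "p2*x+q2*y=r2"
  shows "(a*x+b*y-c) * ((a*p1+b*q1)*(a*q2-b*p2) - (a*q1-b*p1)*(a*p2+b*q2))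
     = - ((a*c*p1+b*c*q1-r1*(a*a+b*b))*(a*q2-b*p2) - (a*q1-b*p1)*(a*c*p2+b*c*q2-r2*(a*a+b*b)))"
  unfolding assms[symmetric] by (simp add: algebra_simps) 

lemma hM_bound:
  assumes "finite A" "L \<in> A"
  shows "\<bar>ht a b L\<bar> < hM A a b c" "\<bar>hm a b c L\<bar> < hM A a b c"
proof -
  have "\<bar>ht a b L\<bar> + \<bar>hm a b c L\<bar> \<le> (\<Sum>L\<in>A. \<bar>ht a b L\<bar> + \<bar>hm a b c L\<bar>)"
    by (rule member_le_sum) (use assms in auto)
  then show "\<bar>ht a b L\<bar> < hM A a b c" "\<bar>hm a b c L\<bar> < hM A a b c"
    unfolding hM_def by auto
qed

lemma pos_mult_nonneg_iff:
  fixes Q X :: real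
  assumes "0 < Q" shows "0 \<le> Q*X \<longleftrightarrow> 0 \<le> X"
  using mult_le_cancel_left_pos[OF assms, of 0 X] by simp

lemma key_lemma:
  assumes "finite A" "\<forall>L\<in>A. is_line L" "L1 \<in> A" "L2 \<in> A" "L1 \<noteq> L2" "P \<in> L1" "P \<in> L2"
    "(a,b) \<noteq> (0,0)"
  shows "(a * fst P + b * snd P \<le> c) \<longleftrightarrow> (prec (hkey A a b c) L1 L2 \<or> prec (hkey A a b c) L2 L1)"
proof -
  have l1: "is_line L1" and l2: "is_line L2" using assms by auto
  have d: "lp L1 * lq L2 - lp L2 * lq L1 \<noteq> 0" by (rule det_nz[OF l1 l2 assms(5-7)])
  define G1 where "G1 = hG a b L1" define G2 where "G2 = hG a b L2"
  define B1 where "B1 = hB a b L1" define B2 where "B2 = hB a b L2"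
  define A1 where "A1 = hA a b c L1" define A2 where "A2 = hA a b c L2"
  define M where "M = hM A a b c"
  have N: "a*a+b*b > 0" using assms(8)
    by (auto simp: sum_squares_gt_zero_iff)
  have S: "B1*G2 - G1*B2 = (a*a+b*b)*(lp L1*lq L2 - lp L2*lq L1)"
    unfolding B1_def G2_def G1_def B2_def hB_def hG_def by (simp add: algebra_simps)
  have N0: "a*a+b*b \<noteq> 0" using N by linarith
  have Snz: "B1*G2 - G1*B2 \<noteq> 0" unfolding S using N0 d by (simp only: mult_eq_0_iff) simp
  have id: "(a* fst P+b* snd P-c)*(B1*G2 - G1*B2) = -(A1*G2 - G1*A2)"
    unfolding B1_def G2_def G1_def B2_def A1_def A2_def hB_def hG_def hA_def
    by (rule ident[OF on_line[OF l1 assms(6)] on_line[OF l2 assms(7)]])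
  define e where "e = a * fst P + b * snd P - c"
  define Sv where "Sv = B1*G2 - G1*B2"
  define Tv where "Tv = A1*G2 - G1*A2"
  have id': "e * Sv = - Tv" using id unfolding e_def Sv_def Tv_def .
  have TS: "Tv * Sv = - (e * (Sv * Sv))"
  proof -
    have "Tv * Sv = - (e * Sv) * Sv" using id' by simp
    then show ?thesis by (simp add: mult.assoc)
  qed
  have SS: "Sv * Sv > 0" using Snz not_real_square_gt_zero[of Sv] unfolding Sv_def by blast
  have "0 \<le> Tv * Sv \<longleftrightarrow> e * (Sv * Sv) \<le> 0" unfolding TS by linarith
  also have "\<dots> \<longleftrightarrow> e \<le> 0" using mult_le_cancel_right_pos[OF SS, of e 0] by simp
  finally have iff: "(a * fst P + b * snd P \<le> c) \<longleftrightarrow> 0 \<le> (A1*G2 - G1*A2)*(B1*G2 - G1*B2)"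
    unfolding e_def Sv_def Tv_def by linarith
  have Mb: "\<bar>ht a b L\<bar> < M" "\<bar>hm a b c L\<bar> < M" if "L \<in> A" for L
    using hM_bound[OF assms(1) that] unfolding M_def by auto
  show ?thesis
  proof (cases "G1 \<noteq> 0")
    case g1: True
    show ?thesis
    proof (cases "G2 \<noteq> 0")
      case g2: True
      define t1 where "t1 = B1/G1" define t2 where "t2 = B2/G2"
      define m1 where "m1 = A1/G1" define m2 where "m2 = A2/G2"
      have k1: "hkey A a b c L1 = (t1, m1)" using g1
        unfolding hkey_def t1_def m1_def G1_def B1_def A1_def ht_def hm_def by simp
      have k2: "hkey A a b c L2 = (t2, m2)" using g2
        unfolding hkey_def t2_def m2_def G2_def B2_def A2_def ht_def hm_def by simp
      have e1: "B1*G2 - G1*B2 = (G1*G2)*(t1 - t2)" using g1 g2 unfolding t1_def t2_def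
        by (simp add: field_simps)
      have e2: "A1*G2 - G1*A2 = (G1*G2)*(m1 - m2)" using g1 g2 unfolding m1_def m2_def
        by (simp add: field_simps)
      have tt: "t1 \<noteq> t2" using Snz e1 by auto
      have g12: "G1*G2 \<noteq> 0" using g1 g2 by simp
      have pos: "(G1*G2)*(G1*G2) > 0" using g12 not_real_square_gt_zero[of "G1*G2"] by blast
      have "0 \<le> (A1*G2 - G1*A2)*(B1*G2 - G1*B2) \<longleftrightarrow> 0 \<le> (m1 - m2)*(t1 - t2)"
      proof -
        have "(A1*G2 - G1*A2)*(B1*G2 - G1*B2) = ((G1*G2)*(G1*G2)) * ((m1 - m2)*(t1 - t2))"
          unfolding e1 e2 by (simp add: algebra_simps)
        then show ?thesis using pos_mult_nonneg_iff[OF pos] by simp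
      qed
      also have "\<dots> \<longleftrightarrow> (t1 \<le> t2 \<and> m1 \<le> m2) \<or> (t2 \<le> t1 \<and> m2 \<le> m1)"
        by (smt (verit) zero_le_mult_iff)
      also have "\<dots> \<longleftrightarrow> (prec (hkey A a b c) L1 L2 \<or> prec (hkey A a b c) L2 L1)"
        unfolding prec_def k1 k2 using tt by auto
      finally show ?thesis using iff by simp
    next
      case g2: False
      then have g2': "G2 = 0" by simp
      have k1: "hkey A a b c L1 = (ht a b L1, hm a b c L1)" using g1
        unfolding hkey_def G1_def by simp
      have b1: "\<bar>ht a b L1\<bar> < M" "\<bar>hm a b c L1\<bar> < M" using Mb assms(3) by auto
      have "(A1*G2 - G1*A2)*(B1*G2 - G1*B2) = (G1*G1) * (A2*B2)" unfolding g2' by (simp add: algebra_simps)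
      moreover have "G1*G1 > 0" using g1 not_real_square_gt_zero[of G1] by blast
      ultimately have iff2: "0 \<le> (A1*G2 - G1*A2)*(B1*G2 - G1*B2) \<longleftrightarrow> 0 \<le> A2 * B2"
        using pos_mult_nonneg_iff by simp
      show ?thesis
      proof (cases "0 \<le> A2 * B2")
        case True
        then have k2: "hkey A a b c L2 = (-M, -M)" using g2'
          unfolding hkey_def G2_def A2_def B2_def M_def by simp
        have l: "a * fst P + b * snd P \<le> c" using iff iff2 True by simp
        have "prec (hkey A a b c) L2 L1" unfolding prec_def k1 k2 using b1 by (auto simp: abs_less_iff)
        then show ?thesis using l by simp
      next
        case False
        then have k2: "hkey A a b c L2 = (M, -M)" using g2'
          unfolding hkey_def G2_def A2_def B2_def M_def by simp
        have l: "\<not> (a * fst P + b * snd P \<le> c)" using iff iff2 False by simp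
        have "\<not> prec (hkey A a b c) L1 L2" "\<not> prec (hkey A a b c) L2 L1"
          unfolding prec_def k1 k2 using b1 by (auto simp: abs_less_iff)
        then show ?thesis using l by simp
      qed
    qed
  next
    case g1: False
    then have g1': "G1 = 0" by simp
    then have g2: "G2 \<noteq> 0" using Snz by auto
    have k2: "hkey A a b c L2 = (ht a b L2, hm a b c L2)" using g2
      unfolding hkey_def G2_def by simp
    have b2: "\<bar>ht a b L2\<bar> < M" "\<bar>hm a b c L2\<bar> < M" using Mb assms(4) by auto
    have "(A1*G2 - G1*A2)*(B1*G2 - G1*B2) = (G2*G2) * (A1*B1)" unfolding g1' by (simp add: algebra_simps)
    moreover have "G2*G2 > 0" using g2 not_real_square_gt_zero[of G2] by blast
    ultimately have iff2: "0 \<le> (A1*G2 - G1*A2)*(B1*G2 - G1*B2) \<longleftrightarrow> 0 \<le> A1 * B1"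
      using pos_mult_nonneg_iff by simp
    show ?thesis
    proof (cases "0 \<le> A1 * B1")
      case True
      then have k1: "hkey A a b c L1 = (-M, -M)" using g1'
        unfolding hkey_def G1_def A1_def B1_def M_def by simp
      have l: "a * fst P + b * snd P \<le> c" using iff iff2 True by simp
        have "prec (hkey A a b c) L1 L2" unfolding prec_def k1 k2 using b2 by (auto simp: abs_less_iff)
        then show ?thesis using l by simp
    next
      case False
      then have k1: "hkey A a b c L1 = (M, -M)" using g1'
        unfolding hkey_def G1_def A1_def B1_def M_def by simp
      have l: "\<not> (a * fst P + b * snd P \<le> c)" using iff iff2 False by simp
        have "\<not> prec (hkey A a b c) L1 L2" "\<not> prec (hkey A a b c) L2 L1"
          unfolding prec_def k1 k2 using b2 by (auto simp: abs_less_iff)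
        then show ?thesis using l by simp
    qed
  qed
qed



definition "good A H \<longleftrightarrow> (\<exists>A'. A' \<subseteq> A \<and> real (card A') \<ge> sqrt (real (card A) / 3) \<and> vertices A' \<subseteq> H)"

lemma aff_between:
  fixes c0 c1 u v w :: real
  assumes "c0 + c1* u > 0" "c0 + c1* v > 0" "u \<le> w" "w \<le> v"
  shows "c0 + c1* w > 0"
proof (cases "c1 \<ge> 0")
  case True
  then have "c1* u \<le> c1* w" using assms(3) by (simp add: mult_left_mono)
  then show ?thesis using assms(1) by linarith
next
  case False
  then have "c1* v \<le> c1* w" using assms(4) by (simp add: mult_left_mono_neg)
  then show ?thesis using assms(2) by linarith
qed

lemma oneD:
  fixes a1 b1 a2 b2 a3 b3 sx sy sz :: real
  assumes "a1+b1* sx > 0" "a2+b2* sx>0" "a3+b3* sx \<le> 0"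
    "a1+b1* sy>0" "a3+b3* sy>0" "a2+b2* sy \<le> 0"
    "a2+b2* sz>0" "a3+b3* sz>0" "a1+b1* sz \<le> 0"
  shows False
proof -
  have "\<not> (sx \<le> sy \<and> sy \<le> sz)" using aff_between[of a2 b2 sx sz sy] assms by auto
  moreover have "\<not> (sz \<le> sy \<and> sy \<le> sx)" using aff_between[of a2 b2 sz sx sy] assms by auto
  moreover have "\<not> (sy \<le> sx \<and> sx \<le> sz)" using aff_between[of a3 b3 sy sz sx] assms by auto
  moreover have "\<not> (sz \<le> sx \<and> sx \<le> sy)" using aff_between[of a3 b3 sz sy sx] assms by auto
  moreover have "\<not> (sx \<le> sz \<and> sz \<le> sy)" using aff_between[of a1 b1 sx sy sz] assms by auto
  moreover have "\<not> (sy \<le> sz \<and> sz \<le> sx)" using aff_between[of a1 b1 sy sx sz] assms by auto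
  ultimately show False by linarith
qed

lemma param:
  fixes p q r x y a b c :: real
  assumes "p* x+q* y = r" "(p,q) \<noteq> (0,0)"
  shows "(a* x+b* y \<le> c) \<longleftrightarrow> (a* p* r+b* q* r-c*(p* p+q* q)) + (b* p-a* q)*(-q* x+p* y) \<le> 0"
proof -
  have e: "(a* p* r+b* q* r-c*(p* p+q* q)) + (b* p-a* q)*(-q* x+p* y) = (p* p+q* q)*(a* x+b* y-c)"
    unfolding assms(1)[symmetric] by (simp add: algebra_simps)
  have N: "p* p+q* q > 0" using assms(2) by (auto simp: sum_squares_gt_zero_iff)
  show ?thesis unfolding e using mult_le_cancel_left_pos[OF N, of "a* x+b* y-c" 0] by simp
qed

lemma good_empty: "good A H" if "card A = 0"
  unfolding good_def using that by (intro exI[of _ "{}"]) (auto simp: vertices_def)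

lemma two:
  assumes "finite A" "\<forall>L\<in>A. is_line L" "B \<subseteq> A" "real (card A) / 3 \<le> real (card B)"
    "\<forall>L\<in>B. vertices A \<inter> L \<subseteq> H1 \<union> H2" "H2 = {(x,y). a* x+b* y \<le> c}" "(a,b) \<noteq> (0,0)"
  shows "good A H1 \<or> good A H2"
proof (cases "card A = 0")
  case True then show ?thesis using good_empty by blast
next
  case False
  define k where "k = sqrt (real (card A) / 3)"
  have kpos: "k > 0" unfolding k_def using False by simp
  have kk: "k* k = real (card A) / 3" unfolding k_def by simp
  define K where "K = hkey A a b c"
  have memH2: "P \<in> H2 \<longleftrightarrow> a * fst P + b * snd P \<le> c" for P by (cases P) (simp add: assms(6))
  have finB: "finite B" using assms(1,3) finite_subset by blast
  show ?thesis
  proof (cases "\<exists>C\<subseteq>B. chn K C \<and> real (card C) \<ge> k")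
    case True
    then obtain C where C: "C \<subseteq> B" "chn K C" "real (card C) \<ge> k" by blast
    have "vertices C \<subseteq> H2"
    proof
      fix P assume "P \<in> vertices C"
      then obtain L1 L2 where L: "L1 \<in> C" "L2 \<in> C" "L1 \<noteq> L2" "P \<in> L1" "P \<in> L2"
        unfolding vertices_def by blast
      have "prec K L1 L2 \<or> prec K L2 L1" using C(2) L unfolding chn_def by blast
      then show "P \<in> H2"
        using key_lemma[OF assms(1,2), of L1 L2 P a b c] L C(1) assms(3,7) memH2
        unfolding K_def by blast
    qed
    then have "good A H2" unfolding good_def k_def[symmetric] using C assms(3) by blast
    then show ?thesis by simp
  next
    case False
    define m where "m = nat (\<lceil>k\<rceil> - 1)"
    have c1: "\<lceil>k\<rceil> \<ge> 1" using kpos by (simp add: zero_less_ceiling)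
    have mreal: "real m = of_int \<lceil>k\<rceil> - 1" unfolding m_def using c1 by simp
    have mk: "real m < k" using mreal ceiling_correct[of k] by linarith
    have chainb: "card C \<le> m" if "C \<subseteq> B" "chn K C" for C
    proof -
      have "real (card C) < k" using False that by auto
      then have "real (card C) < of_int \<lceil>k\<rceil>" using le_of_int_ceiling[of k] by linarith
      then have "int (card C) < \<lceil>k\<rceil>" by linarith
      then show ?thesis unfolding m_def by linarith
    qed
    obtain S where S: "S \<subseteq> B" "antich K S" "card B \<le> m * card S"
      using mirsky[OF finB chainb] by blast
    have Sk: "real (card S) \<ge> k"
    proof (rule ccontr)
      assume "\<not> real (card S) \<ge> k"
      then have lt: "real (card S) < k" by simp
      have "k* k \<le> real (card B)" using kk assms(4) by simp
      also have "\<dots> \<le> real m * real (card S)" using S(3) by (metis of_nat_le_iff of_nat_mult)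
      also have "\<dots> \<le> real m * k" using lt by (simp add: mult_left_mono)
      also have "\<dots> < k * k" using mk kpos by (simp add: mult_strict_right_mono)
      finally show False by simp
    qed
    have "vertices S \<subseteq> H1"
    proof
      fix P assume "P \<in> vertices S"
      then obtain L1 L2 where L: "L1 \<in> S" "L2 \<in> S" "L1 \<noteq> L2" "P \<in> L1" "P \<in> L2"
        unfolding vertices_def by blast
      have inA: "L1 \<in> A" "L2 \<in> A" using L S(1) assms(3) by auto
      have "P \<in> vertices A" unfolding vertices_def using inA L by blast
      then have "P \<in> H1 \<union> H2" using assms(5) L S(1) by blast
      moreover have "\<not> (prec K L1 L2 \<or> prec K L2 L1)" using S(2) L unfolding antich_def by blast
      then have "P \<notin> H2"
        using key_lemma[OF assms(1,2) inA L(3-5) assms(7), of c] memH2 unfolding K_def by blast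
      ultimately show "P \<in> H1" by blast
    qed
    then have "good A H1" unfolding good_def k_def[symmetric] using Sk S(1) assms(3) by blast
    then show ?thesis by simp
  qed
qed



lemma three:
  assumes "finite A" "\<forall>L\<in>A. is_line L"
    "H1 = {(x,y). a1 * x + b1 * y \<le> c1}" "(a1,b1) \<noteq> (0,0)"
    "H2 = {(x,y). a2 * x + b2 * y \<le> c2}" "(a2,b2) \<noteq> (0,0)"
    "H3 = {(x,y). a3 * x + b3 * y \<le> c3}" "(a3,b3) \<noteq> (0,0)"
    "vertices A \<subseteq> H1 \<union> H2 \<union> H3"
  shows "good A H1 \<or> good A H2 \<or> good A H3"
proof -
  define V where "V = vertices A"
  have cover: "V \<inter> L \<subseteq> H1 \<union> H2 \<or> V \<inter> L \<subseteq> H1 \<union> H3 \<or> V \<inter> L \<subseteq> H2 \<union> H3" if LA: "L \<in> A" for L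
  proof (rule ccontr)
    assume "\<not> ?thesis"
    then obtain X Y Z where X: "X \<in> V" "X \<in> L" "X \<notin> H1" "X \<notin> H2"
      and Y: "Y \<in> V" "Y \<in> L" "Y \<notin> H1" "Y \<notin> H3"
      and Z: "Z \<in> V" "Z \<in> L" "Z \<notin> H2" "Z \<notin> H3" by blast
    have X3: "X \<in> H3" and Y2: "Y \<in> H2" and Z1: "Z \<in> H1"
      using X Y Z assms(9) unfolding V_def by auto
    have lL: "is_line L" using assms(2) LA by auto
    define p where "p = lp L" define q where "q = lq L" define r where "r = lr L"
    have pq: "(p,q) \<noteq> (0,0)" unfolding p_def q_def using lrep_spec[OF lL] by simp
    have onl: "p * fst W + q * snd W = r" if "W \<in> L" for W
      unfolding p_def q_def r_def using on_line[OF lL that] .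
    have mem: "W \<in> {(x,y). a * x + b * y \<le> c} \<longleftrightarrow>
       (a * p * r + b * q * r - c * (p * p + q * q)) + (b * p - a * q) * (-q * fst W + p * snd W) \<le> 0"
      if "W \<in> L" for W a b c
      using param[OF onl[OF that] pq, of a b c] by (cases W) simp
    note m1 = mem[where a=a1 and b=b1 and c=c1, folded assms(3)]
    note m2 = mem[where a=a2 and b=b2 and c=c2, folded assms(5)]
    note m3 = mem[where a=a3 and b=b3 and c=c3, folded assms(7)]
    show False
      apply (rule oneD[of "a1 * p * r + b1 * q * r - c1 * (p * p + q * q)" "b1 * p - a1 * q"
            "-q * fst X + p * snd X"
            "a2 * p * r + b2 * q * r - c2 * (p * p + q * q)" "b2 * p - a2 * q"
            "a3 * p * r + b3 * q * r - c3 * (p * p + q * q)" "b3 * p - a3 * q"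
            "-q * fst Y + p * snd Y" "-q * fst Z + p * snd Z"])
      using m1[OF X(2)] m2[OF X(2)] m3[OF X(2)] m1[OF Y(2)] m2[OF Y(2)] m3[OF Y(2)]
        m1[OF Z(2)] m2[OF Z(2)] m3[OF Z(2)] X Y Z X3 Y2 Z1 by auto
  qed
  define B12 where "B12 = {L\<in>A. V \<inter> L \<subseteq> H1 \<union> H2}"
  define B13 where "B13 = {L\<in>A. V \<inter> L \<subseteq> H1 \<union> H3}"
  define B23 where "B23 = {L\<in>A. V \<inter> L \<subseteq> H2 \<union> H3}"
  have "A = B12 \<union> B13 \<union> B23" unfolding B12_def B13_def B23_def using cover by blast
  then have "card A \<le> card (B12 \<union> B13) + card B23" by (simp add: card_Un_le)
  moreover have "card (B12 \<union> B13) \<le> card B12 + card B13" by (rule card_Un_le)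
  ultimately have cs: "card A \<le> card B12 + card B13 + card B23" by linarith
  have sub: "B12 \<subseteq> A" "B13 \<subseteq> A" "B23 \<subseteq> A" unfolding B12_def B13_def B23_def by auto
  have vv: "\<forall>L\<in>B12. vertices A \<inter> L \<subseteq> H1 \<union> H2" "\<forall>L\<in>B13. vertices A \<inter> L \<subseteq> H1 \<union> H3"
     "\<forall>L\<in>B23. vertices A \<inter> L \<subseteq> H2 \<union> H3"
    unfolding B12_def B13_def B23_def V_def by auto
  consider (c12) "real (card A) / 3 \<le> real (card B12)" | (c13) "real (card A) / 3 \<le> real (card B13)"
      | (c23) "real (card A) / 3 \<le> real (card B23)" using cs by linarith
  then show ?thesis
  proof cases
    case c12
    have "good A H1 \<or> good A H2" by (rule two[OF assms(1,2) sub(1) c12 vv(1) assms(5,6)])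
    then show ?thesis by blast
  next
    case c13
    have "good A H1 \<or> good A H3" by (rule two[OF assms(1,2) sub(2) c13 vv(2) assms(7,8)])
    then show ?thesis by blast
  next
    case c23
    have "good A H2 \<or> good A H3" by (rule two[OF assms(1,2) sub(3) c23 vv(3) assms(7,8)])
    then show ?thesis by blast
  qed
qed

theorem mainTheorem5:
  fixes A :: "(real \<times> real) set set"
  assumes "finite A" and "\<forall>L\<in>A. is_line L"
  shows "\<exists>q. \<forall>H. is_closed_halfplane H \<and> q \<in> H \<longrightarrow>
           (\<exists>A'. A' \<subseteq> A \<and> real (card A') \<ge> sqrt (real (card A) / 3) \<and> vertices A' \<subseteq> H)"
proof -
  define V where "V = vertices A"
  have finV: "finite V" unfolding V_def using finite_vertices[OF assms] .
  define F where "F = {convex hull (V - H) | H. is_closed_halfplane H \<and> \<not> good A H}"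
  have tri: "\<exists>v\<in>V. v \<notin> H1 \<and> v \<notin> H2 \<and> v \<notin> H3"
    if t1: "is_closed_halfplane H1" and g1: "\<not> good A H1" and t2: "is_closed_halfplane H2" and g2: "\<not> good A H2"
       and t3: "is_closed_halfplane H3" and g3: "\<not> good A H3" for H1 H2 H3
  proof (rule ccontr)
    assume "\<not> ?thesis"
    then have sub: "vertices A \<subseteq> H1 \<union> H2 \<union> H3" unfolding V_def by blast
    obtain a1 b1 c1 where h1: "(a1, b1) \<noteq> (0, 0)" "H1 = {(x, y). a1 * x + b1 * y \<le> c1}"
      using t1 unfolding is_closed_halfplane_def by blast
    obtain a2 b2 c2 where h2: "(a2, b2) \<noteq> (0, 0)" "H2 = {(x, y). a2 * x + b2 * y \<le> c2}"
      using t2 unfolding is_closed_halfplane_def by blast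
    obtain a3 b3 c3 where h3: "(a3, b3) \<noteq> (0, 0)" "H3 = {(x, y). a3 * x + b3 * y \<le> c3}"
      using t3 unfolding is_closed_halfplane_def by blast
    show False using three[OF assms h1(2) h1(1) h2(2) h2(1) h3(2) h3(1) sub] g1 g2 g3 by blast
  qed
  have finF: "finite F"
  proof (rule finite_subset)
    show "F \<subseteq> (\<lambda>T. convex hull T) ` Pow V"
    proof
      fix C assume "C \<in> F"
      then obtain H where "C = convex hull (V - H)" unfolding F_def by blast
      then show "C \<in> (\<lambda>T. convex hull T) ` Pow V" by (intro image_eqI[of _ _ "V - H"]) auto
    qed
    show "finite ((\<lambda>T. convex hull T) ` Pow V)" using finV by simp
  qed
  have convF: "\<forall>C\<in>F. convex C"
  proof
    fix C assume "C \<in> F"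
    then obtain H where "C = convex hull (V - H)" unfolding F_def by blast
    then show "convex C" by (simp add: convex_convex_hull)
  qed
  have tri2: "C1 \<inter> C2 \<inter> C3 \<noteq> {}" if cc1: "C1 \<in> F" and cc2: "C2 \<in> F" and cc3: "C3 \<in> F" for C1 C2 C3
  proof -
    obtain H1 where H1: "C1 = convex hull (V - H1)" "is_closed_halfplane H1" "\<not> good A H1"
      using cc1 unfolding F_def by blast
    obtain H2 where H2: "C2 = convex hull (V - H2)" "is_closed_halfplane H2" "\<not> good A H2"
      using cc2 unfolding F_def by blast
    obtain H3 where H3: "C3 = convex hull (V - H3)" "is_closed_halfplane H3" "\<not> good A H3"
      using cc3 unfolding F_def by blast
    obtain v where v: "v \<in> V" "v \<notin> H1" "v \<notin> H2" "v \<notin> H3"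
      using tri[OF H1(2,3) H2(2,3) H3(2,3)] by blast
    have "V - H1 \<subseteq> convex hull (V - H1)" "V - H2 \<subseteq> convex hull (V - H2)" "V - H3 \<subseteq> convex hull (V - H3)"
      by (rule hull_subset)+
    then have "v \<in> C1" "v \<in> C2" "v \<in> C3" unfolding H1(1) H2(1) H3(1) using v by blast+
    then show ?thesis by blast
  qed
  have "\<Inter>F \<noteq> {}"
  proof (cases "card F \<ge> 3")
    case True
    show ?thesis
    proof (rule Helly)
      show "DIM(real \<times> real) + 1 \<le> card F" using True by simp
      show "\<forall>s\<in>F. convex s" using convF .
      fix t assume t: "t \<subseteq> F" "card t = DIM(real \<times> real) + 1"
      then have "card t = 3" by simp
      then obtain x y z where "t = {x, y, z}" by (auto simp: card_3_iff)
      then show "\<Inter>t \<noteq> {}" using tri2[of x y z] t(1) by auto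
    qed
  next
    case False
    show ?thesis
    proof (cases "F = {}")
      case True then show ?thesis by simp
    next
      case Fne: False
      then obtain C1 where C1: "C1 \<in> F" by blast
      show ?thesis
      proof (cases "F - {C1} = {}")
        case True
        then have "F = {C1}" using C1 by blast
        then show ?thesis using tri2[OF C1 C1 C1] by simp
      next
        case False
        then obtain C2 where C2: "C2 \<in> F - {C1}" by blast
        have "card (F - {C1}) \<le> 1" using \<open>\<not> card F \<ge> 3\<close> C1 finF by (simp add: card_Diff_singleton)
        then have "card (F - {C1}) = 1" using False finF by (simp add: card_gt_0_iff le_Suc_eq)
        then obtain C2' where "F - {C1} = {C2'}" by (rule card_1_singletonE)
        then have "F = {C1, C2'}" using C1 by blast
        moreover have "C2' \<in> F" using \<open>F - {C1} = {C2'}\<close> by blast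
        ultimately show ?thesis using tri2[OF C1 \<open>C2' \<in> F\<close> \<open>C2' \<in> F\<close>] by simp
      qed
    qed
  qed
  then obtain q where q: "q \<in> \<Inter>F" by blast
  show ?thesis
  proof (intro exI[of _ q] allI impI)
    fix H assume H: "is_closed_halfplane H \<and> q \<in> H"
    show "\<exists>A'. A' \<subseteq> A \<and> real (card A') \<ge> sqrt (real (card A) / 3) \<and> vertices A' \<subseteq> H"
    proof (rule ccontr)
      assume ng: "\<not> ?thesis"
      then have "\<not> good A H" unfolding good_def by blast
      then have "convex hull (V - H) \<in> F" unfolding F_def using H by blast
      then have qC: "q \<in> convex hull (V - H)" using q by blast
      obtain a b c where h: "(a, b) \<noteq> (0, 0)" "H = {(x, y). a * x + b * y \<le> c}"
        using H unfolding is_closed_halfplane_def by blast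
      have inner_eq: "inner (a,b) z = a * fst z + b * snd z" for z :: "real \<times> real"
        by (cases z) (simp add: inner_Pair)
      have "V - H \<subseteq> {z. inner (a,b) z > c}"
        unfolding h(2) inner_eq by auto
      then have "convex hull (V - H) \<subseteq> {z. inner (a,b) z > c}"
        by (rule hull_minimal) (rule convex_halfspace_gt)
      then have "a * fst q + b * snd q > c" using qC inner_eq by auto
      moreover have "a * fst q + b * snd q \<le> c" using H h(2) by (cases q) auto
      ultimately show False by simp
    qed
  qed
qed

end
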